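(* Let $n\ge 0$ and let $v(t)=\sum_{i=0}^{n+1}\mathbf{v}_iB^{n+1}_i(t)$ and $w(t)=\sum_{i=0}^{n+1}\mathbf{w}_iB^{n+1}_i(t)$ be real polynomials of degree at most $n+1$. Define the $(n+1)\times(n+1)$ Toeplitz matrices $T^{v,n}_{ij}=\binom{n+1}{j-i}\mathbf{v}_{j-i}$, $T^{w,n}_{ij}=\binom{n+1}{j-i}\mathbf{w}_{j-i}$, the Hankel matrices $H^{v,n}_{ij}=\binom{n+1}{i+j+1}\mathbf{v}_{i+j+1}$, $H^{w,n}_{ij}=\binom{n+1}{i+j+1}\mathbf{w}_{i+j+1}$ ($0\le i,j\le n$), and $\Delta^n=\mathrm{diag}\big(\binom{n}{j}\big)_{j=0}^n$. Then $$\mathrm{Bez}(v,w)=(\Delta^n)^{-1}\big[H^{v,n}T^{w,n}-H^{w,n}T^{v,n}\big](\Delta^n)^{-1}.$$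
   Context: Bernstein polynomials of degree $n$: $B^n_j(x)=\binom{n}{j}x^j(1-x)^{n-j}$. The Bernstein–Bézout matrix $\mathrm{Bez}(v,w)$ of two polynomials $v,w$ of degree at most $n+1$ is the unique $(n+1)\times(n+1)$ matrix $(b_{ij})_{i,j=0}^n$ satisfying $\frac{v(s)w(t)-v(t)w(s)}{s-t}=\sum_{i,j=0}^n b_{ij}B^n_i(s)B^n_j(t)$. Convention: $\binom{a}{b}=0$ if $b<0$ or $b>a$ (so entries with out-of-range indices vanish, regardless of the undefined coefficient they multiply). *)

theory Defs
  imports "HOL-Analysis.Weierstrass_Theorems"
begin

definition binom_int :: "nat \<Rightarrow> int \<Rightarrow> real" where
  "binom_int a b = (if b < 0 \<or> b > int a then 0 else real (a choose nat b))"

definition bern_poly :: "nat \<Rightarrow> (nat \<Rightarrow> real) \<Rightarrow> real \<Rightarrow> real" where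
  "bern_poly m c x = (\<Sum>i\<le>m. c i * Bernstein m i x)"

definition Bez :: "nat \<Rightarrow> (nat \<Rightarrow> real) \<Rightarrow> (nat \<Rightarrow> real) \<Rightarrow> nat \<Rightarrow> nat \<Rightarrow> real" where
  "Bez n v w = (THE b. (\<forall>i j. (n < i \<or> n < j) \<longrightarrow> b i j = 0) \<and>
     (\<forall>s t. s \<noteq> t \<longrightarrow>
        (bern_poly (n+1) v s * bern_poly (n+1) w t - bern_poly (n+1) v t * bern_poly (n+1) w s) / (s - t)
        = (\<Sum>i\<le>n. \<Sum>j\<le>n. b i j * Bernstein n i s * Bernstein n j t)))"

definition toeplitz_mat :: "nat \<Rightarrow> (nat \<Rightarrow> real) \<Rightarrow> nat \<Rightarrow> nat \<Rightarrow> real" where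
  "toeplitz_mat n c i j = binom_int (n+1) (int j - int i) * c (nat (int j - int i))"

definition hankel_mat :: "nat \<Rightarrow> (nat \<Rightarrow> real) \<Rightarrow> nat \<Rightarrow> nat \<Rightarrow> real" where
  "hankel_mat n c i j = real ((n+1) choose (i+j+1)) * c (i+j+1)"

end

theory Submission
  imports Defs "HOL-Computational_Algebra.Polynomial"
begin


definition gterm :: "nat \<Rightarrow> nat \<Rightarrow> nat \<Rightarrow> real \<Rightarrow> real \<Rightarrow> nat \<Rightarrow> real" where
  "gterm n a b s t k = s^(a-1-k) * (1-s)^(n+1-a+k) * t^(b+k) * (1-t)^(n-b-k)"
definition qterm :: "nat \<Rightarrow> nat \<Rightarrow> nat \<Rightarrow> real \<Rightarrow> real \<Rightarrow> nat \<Rightarrow> real" where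
  "qterm n a b s t k = s^(a-k) * (1-s)^(n+1-a+k) * t^(b+k) * (1-t)^(n+1-b-k)"
definition Gsum :: "nat \<Rightarrow> nat \<Rightarrow> nat \<Rightarrow> real \<Rightarrow> real \<Rightarrow> real" where
  "Gsum n a b s t = (\<Sum>k<min a (n+1-b). gterm n a b s t k)"

lemma gstep:
  assumes "k < a" "k < n+1-b" "a \<le> n+1"
  shows "(s-t) * gterm n a b s t k = qterm n a b s t k - qterm n a b s t (Suc k)"
proof -
  have e1: "a - k = Suc (a-1-k)" and e2: "n+1-b-k = Suc (n-b-k)"
    and e3: "n+1-a+Suc k = Suc (n+1-a+k)" and e4: "a - Suc k = a-1-k"
    and e5: "n+1-b-Suc k = n-b-k" and e6: "b + Suc k = Suc (b+k)"
    using assms by auto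
  show ?thesis unfolding gterm_def qterm_def e1 e2 e3 e4 e5 e6 power_Suc
    by (simp add: algebra_simps)
qed

lemma gsum_tele:
  assumes "a \<le> n+1"
  shows "(s-t) * Gsum n a b s t = qterm n a b s t 0 - qterm n a b s t (min a (n+1-b))"
proof -
  have "(s-t) * Gsum n a b s t = (\<Sum>k<min a (n+1-b). qterm n a b s t k - qterm n a b s t (Suc k))"
    unfolding Gsum_def sum_distrib_left
    by (rule sum.cong) (use assms gstep in auto)
  then show ?thesis by (simp add: sum_lessThan_telescope')
qed

lemma gdiff:
  assumes "a \<le> n+1" "b \<le> n+1"
  shows "(s-t) * (Gsum n a b s t - Gsum n b a s t) =
     s^a*(1-s)^(n+1-a)*t^b*(1-t)^(n+1-b) - s^b*(1-s)^(n+1-b)*t^a*(1-t)^(n+1-a)"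
proof -
  have q: "qterm n a b s t (min a (n+1-b)) = qterm n b a s t (min b (n+1-a))"
  proof (cases "a + b \<le> n+1")
    case True
    then have "min a (n+1-b) = a" "min b (n+1-a) = b" by auto
    then show ?thesis unfolding qterm_def using True by (simp add: algebra_simps)
  next
    case False
    then have "min a (n+1-b) = n+1-b" "min b (n+1-a) = n+1-a" by auto
    moreover have "a - (n+1-b) = b - (n+1-a)" "n+1-a+(n+1-b) = n+1-b+(n+1-a)"
      "b + (n+1-b) = a + (n+1-a)" using False assms by auto
    ultimately show ?thesis unfolding qterm_def using False by (simp add: algebra_simps)
  qed
  show ?thesis unfolding right_diff_distrib gsum_tele[OF assms(1)] gsum_tele[OF assms(2)] q
    by (simp add: qterm_def)
qed



declare binomial_Suc_Suc[simp del]

lemma L1: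
  assumes "k \<le> n"
  shows "(\<Sum>i\<le>n. hankel_mat n u i k * (s^i * (1-s)^(n-i))) =
    (\<Sum>a\<le>n+1. if k < a then real ((n+1) choose a) * u a * (s^(a-1-k) * (1-s)^(n+1-a+k)) else 0)"
proof -
  have "(\<Sum>i\<le>n. hankel_mat n u i k * (s^i * (1-s)^(n-i))) =
        (\<Sum>i\<le>n-k. hankel_mat n u i k * (s^i * (1-s)^(n-i)))"
  proof (rule sum.mono_neutral_right)
    show "\<forall>i\<in>{..n} - {..n - k}. hankel_mat n u i k * (s ^ i * (1 - s) ^ (n - i)) = 0"
    proof
      fix i assume "i \<in> {..n} - {..n - k}"
      then have "n+1 < i+k+1" using assms by auto
      then have "(n+1) choose (i+k+1) = 0" by (rule binomial_eq_0)
      then show "hankel_mat n u i k * (s ^ i * (1 - s) ^ (n - i)) = 0"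
        by (simp add: hankel_mat_def)
    qed
  qed auto
  also have "\<dots> = (\<Sum>i\<le>n-k. (\<lambda>a. real ((n+1) choose a) * u a * (s^(a-1-k) * (1-s)^(n+1-a+k))) (i+k+1))"
  proof (rule sum.cong)
    fix i assume "i \<in> {..n-k}"
    then have "i+k+1-1-k = i" "n+1-(i+k+1)+k = n-i" using assms by auto
    then show "hankel_mat n u i k * (s ^ i * (1 - s) ^ (n - i)) =
         (\<lambda>a. real ((n+1) choose a) * u a * (s^(a-1-k) * (1-s)^(n+1-a+k))) (i+k+1)"
      by (simp only: hankel_mat_def)
  qed simp
  also have "\<dots> = (\<Sum>a\<in>(\<lambda>i. i+k+1) ` {..n-k}. real ((n+1) choose a) * u a * (s^(a-1-k) * (1-s)^(n+1-a+k)))"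
    by (rule sum.reindex[symmetric, unfolded comp_def]) (auto simp: inj_on_def)
  also have "\<dots> = (\<Sum>a\<le>n+1. if k < a then real ((n+1) choose a) * u a * (s^(a-1-k) * (1-s)^(n+1-a+k)) else 0)"
  proof (rule sum.mono_neutral_cong_left)
    show "(\<lambda>i. i+k+1) ` {..n-k} \<subseteq> {..n+1}" using assms by auto
    show "\<forall>a\<in>{..n + 1} - (\<lambda>i. i + k + 1) ` {..n - k}.
       (if k < a then real ((n+1) choose a) * u a * (s ^ (a - 1 - k) * (1 - s) ^ (n + 1 - a + k)) else 0) = 0"
    proof
      fix a assume "a \<in> {..n + 1} - (\<lambda>i. i + k + 1) ` {..n - k}"
      then have a: "a \<le> n+1" "a \<notin> (\<lambda>i. i + k + 1) ` {..n - k}" by auto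
      have "\<not> k < a"
      proof
        assume "k < a"
        then have "a = (a-k-1)+k+1" "a-k-1 \<in> {..n-k}" using a(1) by auto
        then show False using a(2) by (metis image_eqI)
      qed
      then show "(if k < a then real ((n+1) choose a) * u a * (s ^ (a - 1 - k) * (1 - s) ^ (n + 1 - a + k)) else 0) = 0" by simp
    qed
    show "\<And>x. x \<in> (\<lambda>i. i + k + 1) ` {..n - k} \<Longrightarrow>
         real ((n+1) choose x) * u x * (s ^ (x - 1 - k) * (1 - s) ^ (n + 1 - x + k)) =
         (if k < x then real ((n+1) choose x) * u x * (s ^ (x - 1 - k) * (1 - s) ^ (n + 1 - x + k)) else 0)"
      by auto
  qed auto
  finally show ?thesis .
qed



lemma L2:
  assumes "k \<le> n"
  shows "(\<Sum>j\<le>n. toeplitz_mat n z k j * (t^j * (1-t)^(n-j))) =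
    (\<Sum>b\<le>n+1. if b + k \<le> n then real ((n+1) choose b) * z b * (t^(b+k) * (1-t)^(n-b-k)) else 0)"
proof -
  have "(\<Sum>j\<le>n. toeplitz_mat n z k j * (t^j * (1-t)^(n-j))) =
        (\<Sum>j\<in>(\<lambda>b. b+k) ` {..n-k}. toeplitz_mat n z k j * (t^j * (1-t)^(n-j)))"
  proof (rule sum.mono_neutral_right)
    show "(\<lambda>b. b+k) ` {..n-k} \<subseteq> {..n}" using assms by auto
    show "\<forall>j\<in>{..n} - (\<lambda>b. b + k) ` {..n - k}. toeplitz_mat n z k j * (t ^ j * (1 - t) ^ (n - j)) = 0"
    proof
      fix j assume "j \<in> {..n} - (\<lambda>b. b + k) ` {..n - k}"
      then have j: "j \<le> n" "j \<notin> (\<lambda>b. b + k) ` {..n - k}" by auto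
      have "j < k"
      proof (rule ccontr)
        assume "\<not> j < k"
        then have "j = (j-k)+k" "j-k \<in> {..n-k}" using j(1) by auto
        then show False using j(2) by (metis image_eqI)
      qed
      then show "toeplitz_mat n z k j * (t ^ j * (1 - t) ^ (n - j)) = 0"
        by (simp add: toeplitz_mat_def binom_int_def)
    qed
  qed (use assms in auto)
  also have "\<dots> = (\<Sum>b\<le>n-k. toeplitz_mat n z k (b+k) * (t^(b+k) * (1-t)^(n-(b+k))))"
    by (subst sum.reindex) (auto simp: inj_on_def)
  also have "\<dots> = (\<Sum>b\<le>n-k. real ((n+1) choose b) * z b * (t^(b+k) * (1-t)^(n-b-k)))"
    by (rule sum.cong) (use assms in \<open>auto simp: toeplitz_mat_def binom_int_def\<close>)
  also have "\<dots> = (\<Sum>b\<le>n+1. if b + k \<le> n then real ((n+1) choose b) * z b * (t^(b+k) * (1-t)^(n-b-k)) else 0)"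
    by (rule sum.mono_neutral_cong_left) (use assms in auto)
  finally show ?thesis .
qed



lemma inner_k:
  "(\<Sum>k\<le>n. (if k < a then U * (s^(a-1-k) * (1-s)^(n+1-a+k)) else 0) *
             (if b + k \<le> n then Z * (t^(b+k) * (1-t)^(n-b-k)) else 0)) = U * Z * Gsum n a b s t"
proof -
  have "(\<Sum>k\<le>n. (if k < a then U * (s^(a-1-k) * (1-s)^(n+1-a+k)) else 0) *
             (if b + k \<le> n then Z * (t^(b+k) * (1-t)^(n-b-k)) else 0)) =
        (\<Sum>k\<le>n. if k < a \<and> b + k \<le> n then U * Z * gterm n a b s t k else 0)"
    by (rule sum.cong) (auto simp: gterm_def)
  also have "\<dots> = (\<Sum>k\<in>{k\<in>{..n}. k < a \<and> b + k \<le> n}. U * Z * gterm n a b s t k)"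
    by (rule sum.inter_filter[symmetric]) simp
  also have "{k\<in>{..n}. k < a \<and> b + k \<le> n} = {..<min a (n+1-b)}" by auto
  finally show ?thesis by (simp add: Gsum_def sum_distrib_left)
qed

lemma Mlemma:
  "(\<Sum>i\<le>n. \<Sum>j\<le>n. (\<Sum>k\<le>n. hankel_mat n u i k * toeplitz_mat n z k j) *
       ((s^i*(1-s)^(n-i)) * (t^j*(1-t)^(n-j)))) =
   (\<Sum>a\<le>n+1. \<Sum>b\<le>n+1. (real((n+1) choose a) * u a) * (real((n+1) choose b) * z b) * Gsum n a b s t)"
proof -
  define X where "X i = s^i*(1-s)^(n-i)" for i
  define Y where "Y j = t^j*(1-t)^(n-j)" for j
  have "(\<Sum>i\<le>n. \<Sum>j\<le>n. (\<Sum>k\<le>n. hankel_mat n u i k * toeplitz_mat n z k j) * (X i * Y j)) =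
        (\<Sum>i\<le>n. \<Sum>j\<le>n. \<Sum>k\<le>n. (hankel_mat n u i k * X i) * (toeplitz_mat n z k j * Y j))"
    by (simp add: sum_distrib_left sum_distrib_right mult_ac)
  also have "\<dots> = (\<Sum>i\<le>n. \<Sum>k\<le>n. \<Sum>j\<le>n. (hankel_mat n u i k * X i) * (toeplitz_mat n z k j * Y j))"
    by (rule sum.cong[OF refl], rule sum.swap)
  also have "\<dots> = (\<Sum>k\<le>n. \<Sum>i\<le>n. \<Sum>j\<le>n. (hankel_mat n u i k * X i) * (toeplitz_mat n z k j * Y j))"
    by (rule sum.swap)
  also have "\<dots> = (\<Sum>k\<le>n. (\<Sum>i\<le>n. hankel_mat n u i k * X i) * (\<Sum>j\<le>n. toeplitz_mat n z k j * Y j))"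
    by (simp add: sum_product)
  also have "\<dots> = (\<Sum>k\<le>n.
      (\<Sum>a\<le>n+1. if k < a then real ((n+1) choose a) * u a * (s^(a-1-k) * (1-s)^(n+1-a+k)) else 0) *
      (\<Sum>b\<le>n+1. if b + k \<le> n then real ((n+1) choose b) * z b * (t^(b+k) * (1-t)^(n-b-k)) else 0))"
    by (rule sum.cong[OF refl]) (simp add: X_def Y_def L1 L2)
  also have "\<dots> = (\<Sum>k\<le>n. \<Sum>a\<le>n+1. \<Sum>b\<le>n+1.
      (if k < a then real ((n+1) choose a) * u a * (s^(a-1-k) * (1-s)^(n+1-a+k)) else 0) *
      (if b + k \<le> n then real ((n+1) choose b) * z b * (t^(b+k) * (1-t)^(n-b-k)) else 0))"
    by (simp only: sum_product)
  also have "\<dots> = (\<Sum>a\<le>n+1. \<Sum>k\<le>n. \<Sum>b\<le>n+1.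
      (if k < a then real ((n+1) choose a) * u a * (s^(a-1-k) * (1-s)^(n+1-a+k)) else 0) *
      (if b + k \<le> n then real ((n+1) choose b) * z b * (t^(b+k) * (1-t)^(n-b-k)) else 0))"
    by (rule sum.swap)
  also have "\<dots> = (\<Sum>a\<le>n+1. \<Sum>b\<le>n+1. \<Sum>k\<le>n.
      (if k < a then real ((n+1) choose a) * u a * (s^(a-1-k) * (1-s)^(n+1-a+k)) else 0) *
      (if b + k \<le> n then real ((n+1) choose b) * z b * (t^(b+k) * (1-t)^(n-b-k)) else 0))"
    by (rule sum.cong[OF refl], rule sum.swap)
  also have "\<dots> = (\<Sum>a\<le>n+1. \<Sum>b\<le>n+1. (real((n+1) choose a) * u a) * (real((n+1) choose b) * z b) * Gsum n a b s t)"
    by (rule sum.cong[OF refl], rule sum.cong[OF refl], rule inner_k)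
  finally show ?thesis by (simp add: X_def Y_def)
qed



lemma bern_indep:
  fixes a :: "nat \<Rightarrow> real"
  assumes "finite F" "\<forall>s\<in>{0<..<1}-F. (\<Sum>i\<le>n. a i * Bernstein n i s) = 0" "i \<le> n"
  shows "a i = 0"
proof -
  define q where "q = (\<Sum>i\<le>n. monom (a i * real (n choose i)) i)"
  have pq: "poly q x = (\<Sum>i\<le>n. a i * real (n choose i) * x^i)" for x
    by (simp add: q_def poly_sum poly_monom)
  have "(\<lambda>s. s/(1-s)) ` ({0<..<1}-F) \<subseteq> {x. poly q x = 0}"
  proof
    fix x assume "x \<in> (\<lambda>s. s/(1-s)) ` ({0<..<1}-F)"
    then obtain s where s: "s \<in> {0<..<1}-F" and x: "x = s/(1-s)" by auto
    have ne: "1 - s \<noteq> 0" using s by auto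
    have "(\<Sum>i\<le>n. a i * Bernstein n i s) = (1-s)^n * poly q x"
      unfolding pq x sum_distrib_left
    proof (rule sum.cong[OF refl])
      fix i assume "i \<in> {..n}"
      then have "(1-s)^(n-i) = (1-s)^n / (1-s)^i" using ne by (simp add: power_diff)
      then show "a i * Bernstein n i s = (1-s)^n * (a i * real (n choose i) * (s/(1-s))^i)"
        using ne by (simp add: Bernstein_def power_divide)
    qed
    then show "x \<in> {x. poly q x = 0}" using assms(2) s ne by simp
  qed
  moreover have "infinite ((\<lambda>s. s/(1-s)) ` ({0<..<1}-F))"
  proof
    assume fin: "finite ((\<lambda>s. s/(1-s)) ` ({0<..<1}-F))"
    have "inj_on (\<lambda>s. s/(1-s)) ({0<..<1}-F)"
    proof (rule inj_onI)
      fix x y :: real assume "x \<in> {0<..<1}-F" "y \<in> {0<..<1}-F" and eq: "x/(1-x) = y/(1-y)"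
      then have "1-x \<noteq> 0" "1-y \<noteq> 0" by auto
      with eq have "x*(1-y) = y*(1-x)" by (simp add: field_simps)
      then show "x = y" by (simp add: algebra_simps)
    qed
    then have "finite ({0<..<1::real}-F)" using fin finite_imageD by blast
    moreover have "infinite ({0<..<1::real}-F)"
      using assms(1) Diff_infinite_finite infinite_Ioo[of "0::real" 1] by auto
    ultimately show False by simp
  qed
  ultimately have "q = 0" using poly_roots_finite finite_subset by blast
  then have "coeff q i = 0" by simp
  moreover have "coeff q i = a i * real (n choose i)" unfolding q_def by (rule coeff_sum_monom[OF assms(3)])
  ultimately show ?thesis using assms(3) by simp
qed

lemma bez_unique:
  assumes "\<forall>s t. s \<noteq> t \<longrightarrow> (\<Sum>i\<le>n. \<Sum>j\<le>n. c i j * Bernstein n i s * Bernstein n j t) = (0::real)"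
    "i\<le>n" "j\<le>n"
  shows "c i j = 0"
proof -
  have inner: "(\<Sum>j\<le>n. c i j * Bernstein n j t) = 0" if t: "t \<in> {0<..<1}-{}" for t
  proof (rule bern_indep[where F="{t}" and n=n and a="\<lambda>i. \<Sum>j\<le>n. c i j * Bernstein n j t", OF _ _ assms(2)])
    show "\<forall>s\<in>{0<..<1} - {t}. (\<Sum>i\<le>n. (\<Sum>j\<le>n. c i j * Bernstein n j t) * Bernstein n i s) = 0"
    proof
      fix s assume "s \<in> {0<..<1} - {t}"
      then have "s \<noteq> t" by auto
      then have "(\<Sum>i\<le>n. \<Sum>j\<le>n. c i j * Bernstein n i s * Bernstein n j t) = 0" using assms(1) by blast
      then show "(\<Sum>i\<le>n. (\<Sum>j\<le>n. c i j * Bernstein n j t) * Bernstein n i s) = 0"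
        by (simp add: sum_distrib_left sum_distrib_right mult_ac)
    qed
  qed simp
  show ?thesis
    by (rule bern_indep[where F="{}" and n=n and a="c i", OF _ _ assms(3)]) (use inner in auto)
qed



lemma aux_alg:
  fixes c f g :: "nat \<Rightarrow> nat \<Rightarrow> real"
  shows "x * ((\<Sum>a\<in>A. \<Sum>b\<in>A. c a b * f a b) - (\<Sum>a\<in>A. \<Sum>b\<in>A. c a b * g a b)) =
    (\<Sum>a\<in>A. \<Sum>b\<in>A. c a b * (x * (f a b - g a b)))"
  by (simp add: sum_subtractf right_diff_distrib sum_distrib_left mult_ac)

lemma aux2:
  fixes c d F G :: "nat \<Rightarrow> real"
  shows "(\<Sum>a\<in>A. c a * F a) * (\<Sum>b\<in>A. d b * G b) - (\<Sum>a\<in>A. c a * G a) * (\<Sum>b\<in>A. d b * F b)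
    = (\<Sum>a\<in>A. \<Sum>b\<in>A. c a * d b * (F a * G b - F b * G a))"
proof -
  have "(\<Sum>a\<in>A. c a * F a) * (\<Sum>b\<in>A. d b * G b) = (\<Sum>a\<in>A. \<Sum>b\<in>A. c a * d b * (F a * G b))"
    by (subst sum_product) (simp add: mult_ac)
  moreover have "(\<Sum>a\<in>A. c a * G a) * (\<Sum>b\<in>A. d b * F b) = (\<Sum>a\<in>A. \<Sum>b\<in>A. c a * d b * (F b * G a))"
    by (subst sum_product) (simp add: mult_ac)
  ultimately show ?thesis by (simp add: right_diff_distrib sum_subtractf)
qed

lemma key_identity:
  fixes v w :: "nat \<Rightarrow> real"
  shows "bern_poly (n+1) v s * bern_poly (n+1) w t - bern_poly (n+1) v t * bern_poly (n+1) w s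
     = (s - t) * (\<Sum>i\<le>n. \<Sum>j\<le>n. (\<Sum>k\<le>n. hankel_mat n v i k * toeplitz_mat n w k j - hankel_mat n w i k * toeplitz_mat n v k j) * ((s^i*(1-s)^(n-i)) * (t^j*(1-t)^(n-j))))"
proof -
  define V where "V a = real((n+1) choose a) * v a" for a
  define W where "W a = real((n+1) choose a) * w a" for a
  define P where "P a b = s^a*(1-s)^(n+1-a)*t^b*(1-t)^(n+1-b) - s^b*(1-s)^(n+1-b)*t^a*(1-t)^(n+1-a)" for a b
  have "(\<Sum>i\<le>n. \<Sum>j\<le>n. (\<Sum>k\<le>n. hankel_mat n v i k * toeplitz_mat n w k j - hankel_mat n w i k * toeplitz_mat n v k j) * ((s^i*(1-s)^(n-i)) * (t^j*(1-t)^(n-j)))) =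
     (\<Sum>i\<le>n. \<Sum>j\<le>n. (\<Sum>k\<le>n. hankel_mat n v i k * toeplitz_mat n w k j) * ((s^i*(1-s)^(n-i)) * (t^j*(1-t)^(n-j))))
   - (\<Sum>i\<le>n. \<Sum>j\<le>n. (\<Sum>k\<le>n. hankel_mat n w i k * toeplitz_mat n v k j) * ((s^i*(1-s)^(n-i)) * (t^j*(1-t)^(n-j))))"
    by (simp add: sum_subtractf left_diff_distrib)
  also have "\<dots> = (\<Sum>a\<le>n+1. \<Sum>b\<le>n+1. V a * W b * Gsum n a b s t) - (\<Sum>a\<le>n+1. \<Sum>b\<le>n+1. W a * V b * Gsum n a b s t)"
    by (simp only: Mlemma V_def W_def)
  also have "(\<Sum>a\<le>n+1. \<Sum>b\<le>n+1. W a * V b * Gsum n a b s t) = (\<Sum>a\<le>n+1. \<Sum>b\<le>n+1. V a * W b * Gsum n b a s t)"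
    by (subst sum.swap) (simp add: mult_ac)
  finally have "(s - t) * (\<Sum>i\<le>n. \<Sum>j\<le>n. (\<Sum>k\<le>n. hankel_mat n v i k * toeplitz_mat n w k j - hankel_mat n w i k * toeplitz_mat n v k j) * ((s^i*(1-s)^(n-i)) * (t^j*(1-t)^(n-j)))) =
       (\<Sum>a\<le>n+1. \<Sum>b\<le>n+1. V a * W b * ((s-t) * (Gsum n a b s t - Gsum n b a s t)))"
    by (simp only: aux_alg)
  also have "\<dots> = (\<Sum>a\<le>n+1. \<Sum>b\<le>n+1. V a * W b * P a b)"
    by (intro sum.cong refl) (simp add: gdiff P_def)
  also have "\<dots> = bern_poly (n+1) v s * bern_poly (n+1) w t - bern_poly (n+1) v t * bern_poly (n+1) w s"
    unfolding bern_poly_def aux2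
    by (intro sum.cong refl) (simp add: P_def V_def W_def Bernstein_def algebra_simps)
  finally show ?thesis by simp
qed

theorem corollary2p6:
  fixes n :: nat and v w :: "nat \<Rightarrow> real"
  assumes "i \<le> n" and "j \<le> n"
  shows "Bez n v w i j =
    (1 / real (n choose i)) *
    (\<Sum>k\<le>n. hankel_mat n v i k * toeplitz_mat n w k j - hankel_mat n w i k * toeplitz_mat n v k j) *
    (1 / real (n choose j))"
proof -
  define M where "M = (\<lambda>i j. (\<Sum>k\<le>n. hankel_mat n v i k * toeplitz_mat n w k j - hankel_mat n w i k * toeplitz_mat n v k j))"
  define b where "b i j = (if i \<le> n \<and> j \<le> n then (1 / real (n choose i)) * M i j * (1 / real (n choose j)) else 0)" for i j
  have bsum: "(\<Sum>i\<le>n. \<Sum>j\<le>n. b i j * Bernstein n i s * Bernstein n j t) =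
     (\<Sum>i\<le>n. \<Sum>j\<le>n. M i j * ((s^i*(1-s)^(n-i)) * (t^j*(1-t)^(n-j))))" for s t
    by (intro sum.cong refl) (auto simp: b_def Bernstein_def)
  have ident: "(bern_poly (n+1) v s * bern_poly (n+1) w t - bern_poly (n+1) v t * bern_poly (n+1) w s) / (s - t)
        = (\<Sum>i\<le>n. \<Sum>j\<le>n. b i j * Bernstein n i s * Bernstein n j t)" if "s \<noteq> t" for s t
    using that unfolding bsum M_def key_identity[where n=n and v=v and w=w and s=s and t=t] by simp
  have "Bez n v w = b"
    unfolding Bez_def
  proof (rule the_equality)
    show "(\<forall>i j. (n < i \<or> n < j) \<longrightarrow> b i j = 0) \<and> (\<forall>s t. s \<noteq> t \<longrightarrow>
        (bern_poly (n+1) v s * bern_poly (n+1) w t - bern_poly (n+1) v t * bern_poly (n+1) w s) / (s - t)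
        = (\<Sum>i\<le>n. \<Sum>j\<le>n. b i j * Bernstein n i s * Bernstein n j t))"
    proof (intro conjI)
      show "\<forall>i j. (n < i \<or> n < j) \<longrightarrow> b i j = 0" by (simp add: b_def)
      show "\<forall>s t. s \<noteq> t \<longrightarrow>
        (bern_poly (n+1) v s * bern_poly (n+1) w t - bern_poly (n+1) v t * bern_poly (n+1) w s) / (s - t)
        = (\<Sum>i\<le>n. \<Sum>j\<le>n. b i j * Bernstein n i s * Bernstein n j t)" using ident by blast
    qed
    fix b' assume b': "(\<forall>i j. (n < i \<or> n < j) \<longrightarrow> b' i j = 0) \<and> (\<forall>s t. s \<noteq> t \<longrightarrow>
        (bern_poly (n+1) v s * bern_poly (n+1) w t - bern_poly (n+1) v t * bern_poly (n+1) w s) / (s - t)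
        = (\<Sum>i\<le>n. \<Sum>j\<le>n. b' i j * Bernstein n i s * Bernstein n j t))"
    show "b' = b"
    proof (intro ext)
      fix i j
      show "b' i j = b i j"
      proof (cases "i \<le> n \<and> j \<le> n")
        case True
        have "b' i j - b i j = 0"
        proof (rule bez_unique[where n=n and c="\<lambda>i j. b' i j - b i j"])
          show "\<forall>s t. s \<noteq> t \<longrightarrow> (\<Sum>i\<le>n. \<Sum>j\<le>n. (b' i j - b i j) * Bernstein n i s * Bernstein n j t) = 0"
          proof (intro allI impI)
            fix s t :: real assume "s \<noteq> t"
            have "(\<Sum>i\<le>n. \<Sum>j\<le>n. b' i j * Bernstein n i s * Bernstein n j t) =
                       (\<Sum>i\<le>n. \<Sum>j\<le>n. b i j * Bernstein n i s * Bernstein n j t)"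
            proof -
              have e1: "(bern_poly (n+1) v s * bern_poly (n+1) w t - bern_poly (n+1) v t * bern_poly (n+1) w s) / (s - t)
                = (\<Sum>i\<le>n. \<Sum>j\<le>n. b' i j * Bernstein n i s * Bernstein n j t)"
                using b'[THEN conjunct2] \<open>s \<noteq> t\<close> by blast
              show ?thesis using e1 ident[OF \<open>s \<noteq> t\<close>] by simp
            qed
            then show "(\<Sum>i\<le>n. \<Sum>j\<le>n. (b' i j - b i j) * Bernstein n i s * Bernstein n j t) = 0"
              by (simp add: left_diff_distrib sum_subtractf)
          qed
        qed (use True in auto)
        then show ?thesis by simp
      next
        case False
        then have "n < i \<or> n < j" by auto
        then show ?thesis using b'[THEN conjunct1] False by (auto simp: b_def)
      qed
    qed
  qed
  then show ?thesis using assms by (simp add: b_def M_def)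
qed


end
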